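(* Let $f\in\mathcal S_{\mathbf M}$, let $\|\cdot\|$ be either the Luxemburg norm $\|\cdot\|_{\mathbf M}$ or the Orlicz norm $\|\cdot\|^*_{\mathbf M}$ (the same choice throughout), and let $\varphi\in\Phi$ and $\tau>0$ be such that $\varphi$ is nondecreasing on $[0,\tau]$ and $\varphi(\tau)=\max\{\varphi(t):t\in\mathbb R\}$. Then for any $n\in\mathbb N$, $$\omega_\varphi\Big(f,\frac{\tau}{n}\Big)\le\sum_{\nu=1}^n\Big(\varphi\Big(\frac{\tau\nu}{n}\Big)-\varphi\Big(\frac{\tau(\nu-1)}{n}\Big)\Big)E_\nu(f).$$
   Context: $L$ is the space of $2\pi$-periodic Lebesgue integrable functions, with Fourier coefficients $\widehat f(k)=(2\pi)^{-1}\int_0^{2\pi}f(x)e^{-\mathrm{i}kx}\,dx$. Let $\mathbf M=\{M_k\}_{k\in\mathbb Z}$ be a sequence of Orlicz functions on $[0,\infty)$ (nondecreasing, convex, $M_k(0)=0$, $M_k(u)\to\infty$ as $u\to\infty$). For a complex sequence $c=\{c_k\}_{k\in\mathbb Z}$: Luxemburg norm $\|c\|_{\mathbf M}=\inf\{a>0:\sum_kM_k(|c_k|/a)\le1\}$; with $\tilde M_k(v)=\sup\{uv-M_k(u):u\ge0\}$ and $\Lambda$ the set of positive sequences $\lambda$ with $\sum_k\tilde M_k(\lambda_k)\le1$, Orlicz norm $\|c\|^*_{\mathbf M}=\sup\{\sum_k\lambda_k|c_k|:\lambda\in\Lambda\}$. $\mathcal S_{\mathbf M}$ is the space of $f\in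 L$ with $\|\{\widehat f(k)\}\|_{\mathbf M}<\infty$; norms of $f$ are those of $\{\widehat f(k)\}$. $E_\nu(f)=\inf\{\|f-t\|:t\in\mathcal T_{\nu-1}\}$, $\mathcal T_{\nu-1}$ the trigonometric polynomials $\sum_{|k|\le\nu-1}c_ke^{\mathrm{i}kx}$. $\Phi$ is the set of all continuous, bounded, nonnegative, even functions $\varphi:\mathbb R\to\mathbb R$ with $\varphi(0)=0$ such that $\{t:\varphi(t)=0\}$ has Lebesgue measure zero. For $h\in\mathbb R$, $\Delta_h^\varphi f$ is the sequence $\{\varphi(kh)\widehat f(k)\}_{k\in\mathbb Z}$ and $\omega_\varphi(f,\delta)=\sup_{|h|\le\delta}\|\Delta_h^\varphi f\|$. *)

theory Defs
  imports "HOL-Analysis.Analysis"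
begin

definition in_L :: "(real \<Rightarrow> complex) \<Rightarrow> bool" where
  "in_L f \<longleftrightarrow> (\<forall>x. f (x + 2 * pi) = f x) \<and> integrable (lebesgue_on {0..2*pi}) f"

definition fourier_coeff :: "(real \<Rightarrow> complex) \<Rightarrow> int \<Rightarrow> complex" where
  "fourier_coeff f k = complex_of_real (1 / (2 * pi)) *
     (LINT x | lebesgue_on {0..2*pi}. f x * exp (- (\<i> * of_int k * of_real x)))"

definition orlicz_fun :: "(real \<Rightarrow> real) \<Rightarrow> bool" where
  "orlicz_fun g \<longleftrightarrow> g 0 = 0 \<and> mono_on {0..} g \<and> convex_on {0..} g \<and> filterlim g at_top at_top"

text \<open>Luxemburg norm (value \<infinity> when no admissible a exists).\<close>
definition lux_norm :: "(int \<Rightarrow> real \<Rightarrow> real) \<Rightarrow> (int \<Rightarrow> complex) \<Rightarrow> ennreal" where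
  "lux_norm M c = Inf {ennreal a | a. a > 0 \<and>
      (\<Sum>\<^sub>\<infinity>k. ennreal (M k (norm (c k) / a))) \<le> 1}"

definition compl_fun :: "(real \<Rightarrow> real) \<Rightarrow> real \<Rightarrow> ereal" where
  "compl_fun g v = (SUP u\<in>{0..}. ereal (u * v - g u))"

definition Lambda_set :: "(int \<Rightarrow> real \<Rightarrow> real) \<Rightarrow> (int \<Rightarrow> real) set" where
  "Lambda_set M = {lam. (\<forall>k. lam k > 0) \<and>
      (\<Sum>\<^sub>\<infinity>k. e2ennreal (compl_fun (M k) (lam k))) \<le> 1}"

definition orlicz_norm :: "(int \<Rightarrow> real \<Rightarrow> real) \<Rightarrow> (int \<Rightarrow> complex) \<Rightarrow> ennreal" where
  "orlicz_norm M c = (SUP lam\<in>Lambda_set M. \<Sum>\<^sub>\<infinity>k. ennreal (lam k * norm (c k)))"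

definition in_S :: "(int \<Rightarrow> real \<Rightarrow> real) \<Rightarrow> (real \<Rightarrow> complex) \<Rightarrow> bool" where
  "in_S M f \<longleftrightarrow> in_L f \<and> lux_norm M (fourier_coeff f) < \<infinity>"

definition trig_polys :: "nat \<Rightarrow> (real \<Rightarrow> complex) set" where
  "trig_polys m = {t. \<exists>c :: int \<Rightarrow> complex.
      t = (\<lambda>x. \<Sum>k\<in>{- int m..int m}. c k * exp (\<i> * of_int k * of_real x))}"

definition best_approx :: "((int \<Rightarrow> complex) \<Rightarrow> ennreal) \<Rightarrow> (real \<Rightarrow> complex) \<Rightarrow> nat \<Rightarrow> ennreal" where
  "best_approx N f \<nu> = (INF t\<in>trig_polys (\<nu> - 1). N (fourier_coeff (\<lambda>x. f x - t x)))"

definition Phi_class :: "(real \<Rightarrow> real) set" where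
  "Phi_class = {\<phi>. continuous_on UNIV \<phi> \<and> bounded (range \<phi>) \<and> (\<forall>t. \<phi> t \<ge> 0) \<and>
      (\<forall>t. \<phi> (- t) = \<phi> t) \<and> \<phi> 0 = 0 \<and> {t. \<phi> t = 0} \<in> null_sets lebesgue}"

definition Delta_phi :: "(real \<Rightarrow> real) \<Rightarrow> real \<Rightarrow> (real \<Rightarrow> complex) \<Rightarrow> int \<Rightarrow> complex" where
  "Delta_phi \<phi> h f = (\<lambda>k. complex_of_real (\<phi> (of_int k * h)) * fourier_coeff f k)"

definition modulus :: "((int \<Rightarrow> complex) \<Rightarrow> ennreal) \<Rightarrow> (real \<Rightarrow> real) \<Rightarrow> (real \<Rightarrow> complex) \<Rightarrow> real \<Rightarrow> ennreal" where
  "modulus N \<phi> f \<delta> = (SUP h\<in>{h. \<bar>h\<bar> \<le> \<delta>}. N (Delta_phi \<phi> h f))"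

end

theory Submission
  imports Defs
begin


lemma exp_int_has_integral:
  fixes l :: int assumes "l \<noteq> 0"
  shows "((\<lambda>x::real. exp (\<i> * of_int l * of_real x)) has_integral 0) {0..2*pi}"
proof -
  define F where "F = (\<lambda>z::complex. exp (\<i> * of_int l * z) / (\<i> * of_int l))"
  have d: "(F has_field_derivative exp (\<i> * of_int l * z)) (at z)" for z
    unfolding F_def using assms
    by (auto intro!: derivative_eq_intros simp: field_simps)
  have "((\<lambda>x::real. exp (\<i> * of_int l * of_real x)) has_integral (F (of_real (2*pi)) - F (of_real 0))) {0..2*pi}"
    by (rule fundamental_theorem_of_calculus) (auto intro!: has_vector_derivative_real_field d)
  moreover have "F (of_real (2*pi)) - F (of_real 0) = 0"
  proof -
    have "exp (\<i> * of_int l * of_real (2*pi)) = exp ((2 * of_int l * pi) * \<i>)"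
      by (simp add: algebra_simps)
    also have "\<dots> = 1" by (rule exp_integer_2pi) simp
    finally show ?thesis by (simp add: F_def)
  qed
  ultimately show ?thesis by simp
qed

lemma trig_coeff_zero:
  assumes "t \<in> trig_polys m" "\<bar>k\<bar> > int m"
  shows "integrable (lebesgue_on {0..2*pi}) (\<lambda>x. t x * exp (- (\<i> * of_int k * of_real x)))"
    "(LINT x | lebesgue_on {0..2*pi}. t x * exp (- (\<i> * of_int k * of_real x))) = 0"
proof -
  obtain c where t: "t = (\<lambda>x. \<Sum>j\<in>{- int m..int m}. c j * exp (\<i> * of_int j * of_real x))"
    using assms(1) unfolding trig_polys_def by blast
  let ?g = "\<lambda>x. t x * exp (- (\<i> * of_int k * of_real x))"
  have eq: "?g x = (\<Sum>j\<in>{- int m..int m}. c j * exp (\<i> * of_int (j - k) * of_real x))" for x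
    unfolding t sum_distrib_right
    by (intro sum.cong refl) (simp add: mult.assoc flip: exp_add, simp add: algebra_simps)
  have "((\<lambda>x. \<Sum>j\<in>{- int m..int m}. c j * exp (\<i> * of_int (j - k) * of_real x)) has_integral
          (\<Sum>j\<in>{- int m..int m}. c j * 0)) {0..2*pi}"
  proof (intro has_integral_sum finite_atLeastAtMost ballI has_integral_mult_right)
    fix j assume "j \<in> {- int m..int m}"
    then have "j - k \<noteq> 0" using assms(2) by auto
    then show "((\<lambda>x. exp (\<i> * of_int (j - k) * of_real x)) has_integral 0) {0..2*pi}"
      by (rule exp_int_has_integral)
  qed
  then have hi: "(?g has_integral 0) {0..2*pi}" by (simp add: eq)
  have cont: "continuous_on {0..2*pi} ?g"
    unfolding t by (intro continuous_intros)
  show int: "integrable (lebesgue_on {0..2*pi}) ?g"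
    by (rule continuous_imp_integrable_real[OF cont])
  have "(?g has_integral (LINT x | lebesgue_on {0..2*pi}. ?g x)) {0..2*pi}"
    by (rule has_integral_integral_lebesgue_on[OF int]) simp
  then show "(LINT x | lebesgue_on {0..2*pi}. ?g x) = 0"
    using hi has_integral_unique by blast
qed

lemma fourier_diff_high:
  assumes "t \<in> trig_polys m" "\<bar>k\<bar> > int m"
  shows "fourier_coeff (\<lambda>x. f x - t x) k = fourier_coeff f k"
proof -
  let ?e = "\<lambda>x::real. exp (- (\<i> * of_int k * of_real x))"
  note ti = trig_coeff_zero[OF assms]
  have eq: "(\<lambda>x. (f x - t x) * ?e x) = (\<lambda>x. f x * ?e x - t x * ?e x)"
    by (simp add: algebra_simps)
  show ?thesis
  proof (cases "integrable (lebesgue_on {0..2*pi}) (\<lambda>x. f x * ?e x)")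
    case True
    then show ?thesis unfolding fourier_coeff_def eq
      using ti by (simp add: Bochner_Integration.integral_diff)
  next
    case False
    have "\<not> integrable (lebesgue_on {0..2*pi}) (\<lambda>x. (f x - t x) * ?e x)"
    proof
      assume "integrable (lebesgue_on {0..2*pi}) (\<lambda>x. (f x - t x) * ?e x)"
      then have "integrable (lebesgue_on {0..2*pi}) (\<lambda>x. (f x - t x) * ?e x + t x * ?e x)"
        using ti(1) by (rule Bochner_Integration.integrable_add)
      then show False using False by (simp add: algebra_simps)
    qed
    then show ?thesis using False unfolding fourier_coeff_def
      by (simp add: not_integrable_integral_eq)
  qed
qed



lemma sum_le_infsum_ennreal:
  fixes f :: "'a \<Rightarrow> ennreal"
  assumes "finite F" shows "sum f F \<le> infsum f UNIV"
  using assms by (subst nonneg_infsum_complete) (auto intro!: SUP_upper)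

lemma infsum_le_ennreal:
  fixes f :: "'a \<Rightarrow> ennreal"
  assumes "\<And>F. finite F \<Longrightarrow> sum f F \<le> X" shows "infsum f UNIV \<le> X"
  using assms by (subst nonneg_infsum_complete) (auto intro!: SUP_least)

lemma INF_weighted_le:
  fixes x C w :: ennreal and h :: "'b \<Rightarrow> ennreal"
  assumes "S \<noteq> {}" "w \<noteq> \<infinity>" "\<And>t. t \<in> S \<Longrightarrow> x \<le> C + w * h t"
  shows "x \<le> C + w * (INF t\<in>S. h t)"
proof (cases "w = 0")
  case True
  then show ?thesis using assms(1,3) by auto
next
  case False
  obtain wr where wr: "w = ennreal wr" "wr > 0"
    using assms(2) False by (cases w) (auto simp: ennreal_eq_0_iff)
  show ?thesis
  proof (rule ennreal_le_epsilon)
    fix e :: real assume lt: "C + w * (INF t\<in>S. h t) < top" and e: "0 < e"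
    have "(INF t\<in>S. h t) \<noteq> \<infinity>"
    proof
      assume "(INF t\<in>S. h t) = \<infinity>"
      then have "w * (INF t\<in>S. h t) = \<infinity>" using False by (simp add: ennreal_mult_eq_top_iff)
      then show False using lt by simp
    qed
    then obtain t where t: "t \<in> S" "h t < (INF t\<in>S. h t) + ennreal (e / wr)"
      using INF_approx_ennreal[of "e/wr" "INF t\<in>S. h t" h S] e wr by auto
    have "x \<le> C + w * h t" using assms(3) t(1) .
    also have "\<dots> \<le> C + w * ((INF t\<in>S. h t) + ennreal (e / wr))"
      using t(2) by (intro add_left_mono mult_left_mono) auto
    also have "\<dots> = C + w * (INF t\<in>S. h t) + ennreal e"
    proof -
      have "w * ennreal (e / wr) = ennreal e"
        using wr e by (simp add: ennreal_mult[symmetric])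
      then show ?thesis by (simp add: distrib_left add.assoc)
    qed
    finally show "x \<le> C + w * (INF t\<in>S. h t) + ennreal e" .
  qed
qed

lemma sum_INF_le:
  fixes x :: ennreal and w :: "'i \<Rightarrow> ennreal" and g :: "'i \<Rightarrow> 'b \<Rightarrow> ennreal"
  assumes "finite I" "\<And>i. i \<in> I \<Longrightarrow> S i \<noteq> {}" "\<And>i. i \<in> I \<Longrightarrow> w i \<noteq> \<infinity>"
    "\<And>T. (\<And>i. i \<in> I \<Longrightarrow> T i \<in> S i) \<Longrightarrow> x \<le> c + (\<Sum>i\<in>I. w i * g i (T i))"
  shows "x \<le> c + (\<Sum>i\<in>I. w i * (INF t\<in>S i. g i t))"
  using assms
proof (induction I arbitrary: c rule: finite_induct)
  case empty
  then show ?case by auto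
next
  case (insert j I)
  have "x \<le> (c + (\<Sum>i\<in>I. w i * (INF t\<in>S i. g i t))) + w j * (INF t\<in>S j. g j t)"
  proof (rule INF_weighted_le)
    show "S j \<noteq> {}" "w j \<noteq> \<infinity>" using insert by auto
    fix t assume t: "t \<in> S j"
    have "x \<le> (c + w j * g j t) + (\<Sum>i\<in>I. w i * (INF t\<in>S i. g i t))"
    proof (rule insert.IH)
      fix T assume T: "\<And>i. i \<in> I \<Longrightarrow> T i \<in> S i"
      let ?T = "T(j := t)"
      have "x \<le> c + (\<Sum>i\<in>insert j I. w i * g i (?T i))"
        using T t by (intro insert.prems(3)) auto
      also have "(\<Sum>i\<in>insert j I. w i * g i (?T i)) = w j * g j t + (\<Sum>i\<in>I. w i * g i (?T i))"
        using insert.hyps by simp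
      also have "(\<Sum>i\<in>I. w i * g i (?T i)) = (\<Sum>i\<in>I. w i * g i (T i))"
        using insert.hyps(2) by (intro sum.cong) auto
      finally show "x \<le> c + w j * g j t + (\<Sum>i\<in>I. w i * g i (T i))" by (simp add: add.assoc)
    qed (use insert in auto)
    then show "x \<le> c + (\<Sum>i\<in>I. w i * (INF t\<in>S i. g i t)) + w j * g j t"
      by (simp add: ac_simps)
  qed
  then show ?case using insert.hyps by (simp add: ac_simps)
qed



lemma orlicz_comb:
  assumes I: "finite I" and a: "\<And>i. i \<in> I \<Longrightarrow> a i \<ge> 0"
    and cd: "\<And>k. norm (c k) \<le> (\<Sum>i\<in>I. a i * norm (d i k))"
  shows "orlicz_norm M c \<le> (\<Sum>i\<in>I. ennreal (a i) * orlicz_norm M (d i))"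
  unfolding orlicz_norm_def
proof (rule SUP_least)
  fix lam assume "lam \<in> Lambda_set M"
  then have lam: "lam k > 0" for k unfolding Lambda_set_def by auto
  have "(\<Sum>\<^sub>\<infinity>k. ennreal (lam k * norm (c k))) \<le>
        (\<Sum>i\<in>I. ennreal (a i) * (\<Sum>\<^sub>\<infinity>k. ennreal (lam k * norm (d i k))))"
  proof (rule infsum_le_ennreal)
    fix F :: "int set" assume F: "finite F"
    have "(\<Sum>k\<in>F. ennreal (lam k * norm (c k))) \<le>
          (\<Sum>k\<in>F. \<Sum>i\<in>I. ennreal (a i) * ennreal (lam k * norm (d i k)))"
    proof (rule sum_mono)
      fix k
      have "lam k * norm (c k) \<le> (\<Sum>i\<in>I. a i * (lam k * norm (d i k)))"
        using mult_left_mono[OF cd[of k], of "lam k"] lam[of k]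
        by (simp add: sum_distrib_left algebra_simps)
      then have "ennreal (lam k * norm (c k)) \<le> ennreal (\<Sum>i\<in>I. a i * (lam k * norm (d i k)))"
        by (rule ennreal_leI)
      also have "\<dots> = (\<Sum>i\<in>I. ennreal (a i) * ennreal (lam k * norm (d i k)))"
        using a lam[of k] by (subst sum_ennreal[symmetric]) (auto intro!: sum.cong simp: ennreal_mult)
      finally show "ennreal (lam k * norm (c k)) \<le> (\<Sum>i\<in>I. ennreal (a i) * ennreal (lam k * norm (d i k)))" .
    qed
    also have "\<dots> = (\<Sum>i\<in>I. ennreal (a i) * (\<Sum>k\<in>F. ennreal (lam k * norm (d i k))))"
      by (subst sum.swap) (simp add: sum_distrib_left)
    also have "\<dots> \<le> (\<Sum>i\<in>I. ennreal (a i) * (\<Sum>\<^sub>\<infinity>k. ennreal (lam k * norm (d i k))))"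
      by (intro sum_mono mult_left_mono sum_le_infsum_ennreal F) auto
    finally show "(\<Sum>k\<in>F. ennreal (lam k * norm (c k))) \<le> \<dots>" .
  qed
  also have "\<dots> \<le> (\<Sum>i\<in>I. ennreal (a i) * (SUP lam\<in>Lambda_set M. \<Sum>\<^sub>\<infinity>k. ennreal (lam k * norm (d i k))))"
    using \<open>lam \<in> Lambda_set M\<close> by (intro sum_mono mult_left_mono SUP_upper) auto
  finally show "(\<Sum>\<^sub>\<infinity>k. ennreal (lam k * norm (c k))) \<le> \<dots>" .
qed

definition adm :: "(int \<Rightarrow> real \<Rightarrow> real) \<Rightarrow> (int \<Rightarrow> complex) \<Rightarrow> real set" where
  "adm M c = {a. a > 0 \<and> (\<Sum>\<^sub>\<infinity>k. ennreal (M k (norm (c k) / a))) \<le> 1}"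

lemma lux_adm: "lux_norm M c = (INF a\<in>adm M c. ennreal a)"
  unfolding lux_norm_def adm_def by (rule arg_cong[where f=Inf]) auto

lemma orlicz_nonneg: "orlicz_fun g \<Longrightarrow> u \<ge> 0 \<Longrightarrow> g u \<ge> 0"
  unfolding orlicz_fun_def by (metis atLeast_iff mono_onD order_refl)

lemma lux_zero:
  assumes M: "\<And>k. orlicz_fun (M k)" and c: "\<And>k. c k = 0"
  shows "lux_norm M c = 0"
proof -
  have "lux_norm M c \<le> 0"
  proof (rule ennreal_le_epsilon)
    fix e :: real assume e: "0 < e"
    have "e \<in> adm M c" using e M unfolding adm_def orlicz_fun_def by (simp add: c)
    then have "lux_norm M c \<le> ennreal e" unfolding lux_adm by (rule INF_lower)
    then show "lux_norm M c \<le> 0 + ennreal e" by simp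
  qed
  then show ?thesis by simp
qed

lemma lux_comb_pos:
  assumes M: "\<And>k. orlicz_fun (M k)"
    and I: "finite I" "I \<noteq> {}" and a: "\<And>i. i \<in> I \<Longrightarrow> a i > 0"
    and cd: "\<And>k. norm (c k) \<le> (\<Sum>i\<in>I. a i * norm (d i k))"
  shows "lux_norm M c \<le> (\<Sum>i\<in>I. ennreal (a i) * lux_norm M (d i))"
proof (cases "\<exists>i\<in>I. adm M (d i) = {}")
  case True
  then obtain j where j: "j \<in> I" "adm M (d j) = {}" by blast
  have "ennreal (a j) * lux_norm M (d j) = \<infinity>"
    using j a[OF j(1)] unfolding lux_adm by (simp add: ennreal_mult_eq_top_iff)
  moreover have "ennreal (a j) * lux_norm M (d j) \<le> (\<Sum>i\<in>I. ennreal (a i) * lux_norm M (d i))"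
    using I j(1) by (intro member_le_sum) auto
  ultimately show ?thesis by (simp add: top_unique)
next
  case False
  have "lux_norm M c \<le> 0 + (\<Sum>i\<in>I. ennreal (a i) * (INF b\<in>adm M (d i). ennreal b))"
  proof (rule sum_INF_le)
    fix T assume T: "\<And>i. i \<in> I \<Longrightarrow> T i \<in> adm M (d i)"
    then have Tpos: "\<And>i. i \<in> I \<Longrightarrow> T i > 0" unfolding adm_def by auto
    define B where "B = (\<Sum>i\<in>I. a i * T i)"
    have Bpos: "B > 0" unfolding B_def using I a Tpos by (intro sum_pos) auto
    define w where "w i = a i * T i / B" for i
    have wpos: "w i \<ge> 0" if "i \<in> I" for i using a[OF that] Tpos[OF that] Bpos unfolding w_def by auto
    have wsum: "(\<Sum>i\<in>I. w i) = 1"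
      unfolding w_def using Bpos by (simp add: sum_divide_distrib[symmetric] B_def)
    have "B \<in> adm M c"
      unfolding adm_def
    proof (intro CollectI conjI Bpos infsum_le_ennreal)
      fix F :: "int set" assume F: "finite F"
      have "(\<Sum>k\<in>F. ennreal (M k (norm (c k) / B))) \<le>
            (\<Sum>k\<in>F. \<Sum>i\<in>I. ennreal (w i) * ennreal (M k (norm (d i k) / T i)))"
      proof (rule sum_mono)
        fix k
        have conv: "convex_on {0..} (M k)" using M[of k] unfolding orlicz_fun_def by auto
        have mono: "mono_on {0..} (M k)" using M[of k] unfolding orlicz_fun_def by auto
        have eqs: "(\<Sum>i\<in>I. w i *\<^sub>R (norm (d i k) / T i)) = (\<Sum>i\<in>I. a i * norm (d i k)) / B"
          unfolding w_def sum_divide_distrib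
        proof (intro sum.cong refl)
          fix i assume "i \<in> I"
          then have "T i > 0" by (rule Tpos)
          then show "(a i * T i / B) *\<^sub>R (norm (d i k) / T i) = a i * norm (d i k) / B"
            by (simp add: field_simps)
        qed
        have "M k (norm (c k) / B) \<le> M k (\<Sum>i\<in>I. w i *\<^sub>R (norm (d i k) / T i))"
          unfolding eqs
        proof (rule mono_onD[OF mono])
          show "norm (c k) / B \<in> {0..}" using Bpos by auto
          show "(\<Sum>i\<in>I. a i * norm (d i k)) / B \<in> {0..}"
            using Bpos a by (simp, intro divide_nonneg_pos sum_nonneg mult_nonneg_nonneg) (auto simp: less_imp_le)
          show "norm (c k) / B \<le> (\<Sum>i\<in>I. a i * norm (d i k)) / B"
            using Bpos cd[of k] by (simp add: divide_right_mono)
        qed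
        also have "\<dots> \<le> (\<Sum>i\<in>I. w i * M k (norm (d i k) / T i))"
        proof (rule convex_on_sum[OF I(1) I(2) conv wsum])
          fix i assume i: "i \<in> I"
          show "w i \<ge> 0" using wpos[OF i] .
          show "norm (d i k) / T i \<in> {0..}" using Tpos[OF i] by simp
        qed
        finally have le: "M k (norm (c k) / B) \<le> (\<Sum>i\<in>I. w i * M k (norm (d i k) / T i))" .
        have "ennreal (M k (norm (c k) / B)) \<le> ennreal (\<Sum>i\<in>I. w i * M k (norm (d i k) / T i))"
          using le by (rule ennreal_leI)
        also have "\<dots> = (\<Sum>i\<in>I. ennreal (w i) * ennreal (M k (norm (d i k) / T i)))"
        proof -
          have Mnn: "0 \<le> M k (norm (d i k) / T i)" if i: "i \<in> I" for i
            using Tpos[OF i] by (intro orlicz_nonneg[OF M[of k]]) simp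
          have "ennreal (\<Sum>i\<in>I. w i * M k (norm (d i k) / T i)) = (\<Sum>i\<in>I. ennreal (w i * M k (norm (d i k) / T i)))"
            using wpos Mnn by (intro sum_ennreal[symmetric]) simp
          also have "\<dots> = (\<Sum>i\<in>I. ennreal (w i) * ennreal (M k (norm (d i k) / T i)))"
          proof (rule sum.cong[OF refl])
            fix i assume i: "i \<in> I"
            show "ennreal (w i * M k (norm (d i k) / T i)) = ennreal (w i) * ennreal (M k (norm (d i k) / T i))"
              using wpos[OF i] Mnn[OF i] by (simp add: ennreal_mult)
          qed
          finally show ?thesis .
        qed
        finally show "ennreal (M k (norm (c k) / B)) \<le> (\<Sum>i\<in>I. ennreal (w i) * ennreal (M k (norm (d i k) / T i)))" .
      qed
      also have "\<dots> = (\<Sum>i\<in>I. ennreal (w i) * (\<Sum>k\<in>F. ennreal (M k (norm (d i k) / T i))))"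
        by (subst sum.swap) (simp add: sum_distrib_left)
      also have "\<dots> \<le> (\<Sum>i\<in>I. ennreal (w i) * 1)"
      proof (intro sum_mono mult_left_mono)
        fix i assume "i \<in> I"
        have "(\<Sum>k\<in>F. ennreal (M k (norm (d i k) / T i))) \<le> (\<Sum>\<^sub>\<infinity>k. ennreal (M k (norm (d i k) / T i)))"
          using F by (rule sum_le_infsum_ennreal)
        also have "\<dots> \<le> 1" using T[OF \<open>i \<in> I\<close>] unfolding adm_def by auto
        finally show "(\<Sum>k\<in>F. ennreal (M k (norm (d i k) / T i))) \<le> 1" .
      qed auto
      also have "\<dots> = 1"
        using wpos wsum by (simp add: sum_ennreal)
      finally show "(\<Sum>k\<in>F. ennreal (M k (norm (c k) / B))) \<le> 1" .
    qed
    then have "lux_norm M c \<le> ennreal B" unfolding lux_adm by (rule INF_lower)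
    also have "ennreal B = (\<Sum>i\<in>I. ennreal (a i) * ennreal (T i))"
      unfolding B_def using a Tpos
      by (subst sum_ennreal[symmetric]) (auto intro!: sum.cong simp: ennreal_mult less_imp_le)
    finally show "lux_norm M c \<le> 0 + (\<Sum>i\<in>I. ennreal (a i) * ennreal (T i))" by simp
  qed (use I False in auto)
  then show ?thesis unfolding lux_adm by simp
qed

lemma lux_comb:
  assumes M: "\<And>k. orlicz_fun (M k)"
    and I: "finite I" and a: "\<And>i. i \<in> I \<Longrightarrow> a i \<ge> 0"
    and cd: "\<And>k. norm (c k) \<le> (\<Sum>i\<in>I. a i * norm (d i k))"
  shows "lux_norm M c \<le> (\<Sum>i\<in>I. ennreal (a i) * lux_norm M (d i))"
proof -
  define J where "J = {i\<in>I. a i > 0}"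
  have JI: "J \<subseteq> I" "finite J" using I unfolding J_def by auto
  have cdJ: "norm (c k) \<le> (\<Sum>i\<in>J. a i * norm (d i k))" for k
  proof -
    have "(\<Sum>i\<in>I. a i * norm (d i k)) = (\<Sum>i\<in>J. a i * norm (d i k))"
    proof (rule sum.mono_neutral_right[OF I JI(1)])
      show "\<forall>i\<in>I - J. a i * norm (d i k) = 0"
      proof
        fix i assume "i \<in> I - J"
        then have "a i = 0" using a[of i] unfolding J_def by auto
        then show "a i * norm (d i k) = 0" by simp
      qed
    qed
    then show ?thesis using cd[of k] by simp
  qed
  show ?thesis
  proof (cases "J = {}")
    case True
    then have "c k = 0" for k using cdJ[of k] by simp
    then show ?thesis using lux_zero[OF M] by simp
  next
    case False
    have "lux_norm M c \<le> (\<Sum>i\<in>J. ennreal (a i) * lux_norm M (d i))"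
      using JI False cdJ by (intro lux_comb_pos[OF M]) (auto simp: J_def)
    also have "\<dots> \<le> (\<Sum>i\<in>I. ennreal (a i) * lux_norm M (d i))"
      using JI I by (intro sum_mono2) auto
    finally show ?thesis .
  qed
qed



lemma telescope_nat:
  fixes G :: "nat \<Rightarrow> real"
  shows "(\<Sum>\<nu>=1..p. G \<nu> - G (\<nu> - 1)) = G p - G 0"
  by (induction p) (auto simp: sum.atLeast_Suc_atMost_Suc_shift)

lemma N_comb:
  assumes M: "\<And>k. orlicz_fun (M k)" and N: "N = lux_norm M \<or> N = orlicz_norm M"
    and I: "finite I" and a: "\<And>i. i \<in> I \<Longrightarrow> a i \<ge> 0"
    and cd: "\<And>k. norm (c k) \<le> (\<Sum>i\<in>I. a i * norm (d i k))"
  shows "N c \<le> (\<Sum>i\<in>I. ennreal (a i) * N (d i))"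
  using N lux_comb[OF M I a cd] orlicz_comb[OF I a cd] by auto

theorem theorem3:
  fixes M :: "int \<Rightarrow> real \<Rightarrow> real" and N :: "(int \<Rightarrow> complex) \<Rightarrow> ennreal"
    and f :: "real \<Rightarrow> complex" and \<phi> :: "real \<Rightarrow> real" and \<tau> :: real and n :: nat
  assumes "\<And>k. orlicz_fun (M k)"
    and "N = lux_norm M \<or> N = orlicz_norm M"
    and "in_S M f"
    and "\<phi> \<in> Phi_class"
    and "\<tau> > 0"
    and "mono_on {0..\<tau>} \<phi>"
    and "\<forall>t. \<phi> t \<le> \<phi> \<tau>"
    and "n \<ge> 1"
  shows "modulus N \<phi> f (\<tau> / real n) \<le>
    (\<Sum>\<nu>=1..n. ennreal (\<phi> (\<tau> * real \<nu> / real n) - \<phi> (\<tau> * (real \<nu> - 1) / real n))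
                  * best_approx N f \<nu>)"
proof -
  note M = assms(1) and NN = assms(2) and tau = assms(5) and mono = assms(6)
    and phimax = assms(7) and n = assms(8)
  have phi0: "\<phi> 0 = 0" and phinn: "\<And>t. \<phi> t \<ge> 0" and phieven: "\<And>t. \<phi> (- t) = \<phi> t"
    using assms(4) unfolding Phi_class_def by auto
  define G where "G j = \<phi> (\<tau> * real j / real n)" for j :: nat
  define a where "a \<nu> = \<phi> (\<tau> * real \<nu> / real n) - \<phi> (\<tau> * (real \<nu> - 1) / real n)" for \<nu> :: nat
  have aG: "a \<nu> = G \<nu> - G (\<nu> - 1)" if "\<nu> \<ge> 1" for \<nu>
    using that unfolding a_def G_def by (simp add: of_nat_diff)
  have npos: "real n > 0" using n by simp
  have anonneg: "a \<nu> \<ge> 0" if "\<nu> \<in> {1..n}" for \<nu>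
  proof -
    have "\<phi> (\<tau> * (real \<nu> - 1) / real n) \<le> \<phi> (\<tau> * real \<nu> / real n)"
    proof (rule mono_onD[OF mono])
      have le1: "\<tau> * real \<nu> \<le> \<tau> * real n" using tau that by (intro mult_left_mono) auto
      have le0: "\<tau> * (real \<nu> - 1) \<le> \<tau> * real \<nu>" using tau by (intro mult_left_mono) auto
      have ge0: "0 \<le> \<tau> * (real \<nu> - 1)" using tau that by (intro mult_nonneg_nonneg) auto
      have "\<tau> * real n / real n = \<tau>" using npos by simp
      then have "\<tau> * real \<nu> / real n \<le> \<tau>" using le1 npos by (metis divide_right_mono less_imp_le)
      moreover have "\<tau> * (real \<nu> - 1) / real n \<le> \<tau> * real \<nu> / real n" using le0 npos by (simp add: divide_right_mono)
      moreover have "0 \<le> \<tau> * (real \<nu> - 1) / real n" using ge0 npos by simp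
      ultimately show "\<tau> * (real \<nu> - 1) / real n \<in> {0..\<tau>}" "\<tau> * real \<nu> / real n \<in> {0..\<tau>}"
        by auto
      show "\<tau> * (real \<nu> - 1) / real n \<le> \<tau> * real \<nu> / real n"
      proof (rule divide_right_mono)
        show "\<tau> * (real \<nu> - 1) \<le> \<tau> * real \<nu>" using tau by (intro mult_left_mono) auto
      qed (use npos in simp)
    qed
    then show ?thesis unfolding a_def by simp
  qed
  have pointwise: "norm (Delta_phi \<phi> h f k) \<le> (\<Sum>\<nu>=1..n. a \<nu> * norm (fourier_coeff (\<lambda>x. f x - T \<nu> x) k))"
    if h: "\<bar>h\<bar> \<le> \<tau> / real n" and T: "\<And>\<nu>. \<nu> \<in> {1..n} \<Longrightarrow> T \<nu> \<in> trig_polys (\<nu> - 1)" for h T k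
  proof -
    define m where "m = nat \<bar>k\<bar>"
    define p where "p = min m n"
    have km: "\<bar>of_int k\<bar> = real m" unfolding m_def by simp
    have "\<phi> (of_int k * h) = \<phi> \<bar>of_int k * h\<bar>"
      by (cases "of_int k * h \<ge> 0") (auto simp: phieven abs_if)
    also have "\<dots> \<le> G p"
    proof (cases "m \<le> n")
      case True
      then have pm: "p = m" unfolding p_def by simp
      have "\<bar>of_int k * h\<bar> \<le> real m * (\<tau> / real n)"
        unfolding abs_mult km using h by (intro mult_left_mono) auto
      then have le: "\<bar>of_int k * h\<bar> \<le> \<tau> * real m / real n" by (simp add: mult.commute)
      show ?thesis unfolding pm G_def
      proof (rule mono_onD[OF mono])
        show "\<tau> * real m / real n \<in> {0..\<tau>}" using True tau npos by (auto simp: field_simps)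
        then show "\<bar>of_int k * h\<bar> \<in> {0..\<tau>}" using le by auto
      qed (rule le)
    next
      case False
      then have "p = n" unfolding p_def by simp
      then show ?thesis unfolding G_def using npos phimax by simp
    qed
    also have "G p = (\<Sum>\<nu>=1..p. a \<nu>)"
      using telescope_nat[of G p] aG by (simp add: G_def phi0)
    finally have phib: "\<phi> (of_int k * h) \<le> (\<Sum>\<nu>=1..p. a \<nu>)" .
    have "norm (Delta_phi \<phi> h f k) = \<phi> (of_int k * h) * norm (fourier_coeff f k)"
      unfolding Delta_phi_def using phinn by (simp add: norm_mult)
    also have "\<dots> \<le> (\<Sum>\<nu>=1..p. a \<nu>) * norm (fourier_coeff f k)"
      using phib by (intro mult_right_mono) auto
    also have "\<dots> = (\<Sum>\<nu>=1..p. a \<nu> * norm (fourier_coeff (\<lambda>x. f x - T \<nu> x) k))"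
      unfolding sum_distrib_right
    proof (rule sum.cong[OF refl])
      fix \<nu> assume \<nu>: "\<nu> \<in> {1..p}"
      then have "\<nu> \<in> {1..n}" "\<bar>k\<bar> > int (\<nu> - 1)" unfolding p_def m_def by auto
      then show "a \<nu> * norm (fourier_coeff f k) = a \<nu> * norm (fourier_coeff (\<lambda>x. f x - T \<nu> x) k)"
        using fourier_diff_high[OF T] by simp
    qed
    also have "\<dots> \<le> (\<Sum>\<nu>=1..n. a \<nu> * norm (fourier_coeff (\<lambda>x. f x - T \<nu> x) k))"
      using anonneg by (intro sum_mono2) (auto simp: p_def)
    finally show ?thesis .
  qed
  show ?thesis
    unfolding modulus_def
  proof (rule SUP_least)
    fix h assume "h \<in> {h. \<bar>h\<bar> \<le> \<tau> / real n}"
    then have h: "\<bar>h\<bar> \<le> \<tau> / real n" by simp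
    have "N (Delta_phi \<phi> h f) \<le> 0 + (\<Sum>\<nu>=1..n. ennreal (a \<nu>) *
            (INF t\<in>trig_polys (\<nu> - 1). N (fourier_coeff (\<lambda>x. f x - t x))))"
    proof (rule sum_INF_le)
      fix T assume T: "\<And>\<nu>. \<nu> \<in> {1..n} \<Longrightarrow> T \<nu> \<in> trig_polys (\<nu> - 1)"
      show "N (Delta_phi \<phi> h f) \<le> 0 + (\<Sum>\<nu>=1..n. ennreal (a \<nu>) * N (fourier_coeff (\<lambda>x. f x - T \<nu> x)))"
        using N_comb[OF M NN finite_atLeastAtMost anonneg pointwise[OF h T]] by simp
    next
      fix \<nu> :: nat
      have "(\<lambda>x. \<Sum>k\<in>{- int (\<nu> - 1)..int (\<nu> - 1)}. (0::complex) * exp (\<i> * of_int k * of_real x)) \<in> trig_polys (\<nu> - 1)"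
        unfolding trig_polys_def by (rule CollectI, rule exI[of _ "\<lambda>_. 0"]) simp
      then show "trig_polys (\<nu> - 1) \<noteq> {}" by blast
    qed auto
    then show "N (Delta_phi \<phi> h f) \<le> (\<Sum>\<nu>=1..n. ennreal (\<phi> (\<tau> * real \<nu> / real n) - \<phi> (\<tau> * (real \<nu> - 1) / real n))
                  * best_approx N f \<nu>)"
      unfolding best_approx_def a_def by simp
  qed
qed

end
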